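(* Let $n\geq2$, $\sigma>0$ and $x_0\in(0,\infty)$, and let $u$ be the solution of the initial value problem $$u''=\Big[\frac{x}{2}u'+\frac{n-1}{u}-\frac{u}{2}\Big]\big(1+(u')^2\big),\qquad u(x_0)=\sigma x_0,\qquad u'(x_0)\geq\sigma,$$ maximally extended to the right on an interval $(x_0,x_\infty)$ (with $u>0$). Then $x_\infty<\infty$, and if $u(x_0)\geq\sqrt{2(n-1)}$, then $x_\infty\leq\big(1+\frac{1}{n-1}\big)x_0$. *)

theory Defs
  imports "HOL-Analysis.Analysis"
begin

definition ode_rhs :: "nat \<Rightarrow> real \<Rightarrow> real \<Rightarrow> real \<Rightarrow> real" where
  "ode_rhs n x y p = (x / 2 * p + (real n - 1) / y - y / 2) * (1 + p\<^sup>2)"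

definition is_sol :: "nat \<Rightarrow> real \<Rightarrow> ereal \<Rightarrow> (real \<Rightarrow> real) \<Rightarrow> (real \<Rightarrow> real) \<Rightarrow> bool" where
  "is_sol n a b u u' \<longleftrightarrow>
     (\<forall>x. a \<le> x \<and> ereal x < b \<longrightarrow>
        u x > 0 \<and>
        (u has_real_derivative u' x) (at x within {a..}) \<and>
        (u' has_real_derivative ode_rhs n x (u x) (u' x)) (at x within {a..}))"

definition is_maximal_sol :: "nat \<Rightarrow> real \<Rightarrow> ereal \<Rightarrow> (real \<Rightarrow> real) \<Rightarrow> (real \<Rightarrow> real) \<Rightarrow> bool" where
  "is_maximal_sol n a b u u' \<longleftrightarrow>
     is_sol n a b u u' \<and>
     \<not> (\<exists>c v v'. b < c \<and> is_sol n a c v v' \<and> (\<forall>x. a \<le> x \<and> ereal x < b \<longrightarrow> v x = u x))"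

end

theory Submission imports Defs begin

lemma sol_D:
  assumes "is_sol n a b u u'" "a \<le> x" "ereal x < b"
  shows "u x > 0" "(u has_real_derivative u' x) (at x within {a..})"
    "(u' has_real_derivative ode_rhs n x (u x) (u' x)) (at x within {a..})"
  using assms unfolding is_sol_def by auto

lemma sol_at:
  assumes "is_sol n a b u u'" "a < x" "ereal x < b"
  shows "(u has_real_derivative u' x) (at x)"
    "(u' has_real_derivative ode_rhs n x (u x) (u' x)) (at x)"
proof -
  have "at x within {a..} = at x" using assms(2) by (intro at_within_interior) auto
  then show "(u has_real_derivative u' x) (at x)"
    "(u' has_real_derivative ode_rhs n x (u x) (u' x)) (at x)"
    using sol_D[OF assms(1) _ assms(3)] assms(2) by auto
qed

lemma sol_cont:
  assumes "is_sol n a b u u'" "ereal t < b"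
  shows "continuous_on {a..t} u" "continuous_on {a..t} u'"
proof -
  have D: "a \<le> x \<Longrightarrow> x \<le> t \<Longrightarrow> ereal x < b" for x using assms(2)
    by (meson ereal_less_eq(3) le_less_trans)
  show "continuous_on {a..t} u" unfolding continuous_on_eq_continuous_within
  proof
    fix x assume "x \<in> {a..t}"
    then have "continuous (at x within {a..}) u" by (intro DERIV_continuous[OF sol_D(2)[OF assms(1) _ D]]) auto
    then show "continuous (at x within {a..t}) u" by (rule continuous_within_subset) auto
  qed
  show "continuous_on {a..t} u'" unfolding continuous_on_eq_continuous_within
  proof
    fix x assume "x \<in> {a..t}"
    then have "continuous (at x within {a..}) u'" by (intro DERIV_continuous[OF sol_D(3)[OF assms(1) _ D]]) auto
    then show "continuous (at x within {a..t}) u'" by (rule continuous_within_subset) auto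
  qed
qed

lemma sol_restrict:
  assumes "is_sol n a b u u'" "a \<le> a'"
  shows "is_sol n a' b u u'"
proof -
  have sub: "{a'..} \<subseteq> {a..}" using assms(2) by auto
  show ?thesis using assms(1) assms(2) unfolding is_sol_def
    by (auto intro: DERIV_subset[OF _ sub])
qed

lemma key_alg:
  fixes x U P m :: real
  assumes x: "x > 0" and U: "U > 0" and m: "m \<ge> 1" and big: "U^2 \<ge> 2*m" and ph: "x*P - U \<ge> 0"
  shows "x * (((P + x*((x/2*P + m/U - U/2)*(1+P^2)))*U - x*P^2)/U^2) \<ge> (m - 1/4) * (x*P/U)^3"
proof -
  define y where "y = x*P/U"
  have y1: "y \<ge> 1" using ph U by (simp add: y_def field_simps)
  have P: "P = y*U/x" using x U by (simp add: y_def field_simps)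
  have Ppos: "P > 0" using y1 U x by (simp add: P)
  define Q where "Q = (x*P - U)/2 + m/U"
  have Qnn: "Q \<ge> 0" using ph U m by (simp add: Q_def)
  have R: "x/2*P + m/U - U/2 = Q" by (simp add: Q_def field_simps)
  have lhs: "x * (((P + x*((x/2*P + m/U - U/2)*(1+P^2)))*U - x*P^2)/U^2)
      = y + x^2 * (Q*(1+P^2)) / U - y^2"
    unfolding R using U x by (simp add: y_def field_simps power2_eq_square)
  have "x^2 * (Q*(1+P^2)) / U \<ge> x^2 * (Q*P^2) / U"
    using Qnn U x by (intro divide_right_mono mult_left_mono) (auto simp: algebra_simps)
  also have "x^2 * (Q*P^2) / U = y^2 * (U*Q)"
    using U x by (simp add: y_def field_simps power2_eq_square)
  also have "U*Q = U^2*(y-1)/2 + m"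
    using U x by (simp add: Q_def y_def field_simps power2_eq_square)
  finally have A: "x^2 * (Q*(1+P^2)) / U \<ge> y^2 * (U^2*(y-1)/2 + m)" .
  have "U^2*(y-1)/2 \<ge> m*(y-1)" using big y1
    by (metis diff_ge_0_iff_ge mult.commute mult_right_mono times_divide_eq_left le_divide_eq_numeral1(1) mult.assoc)
  then have "y^2 * (U^2*(y-1)/2 + m) \<ge> y^2 * (m*(y-1) + m)"
    by (intro mult_left_mono) auto
  with A have "x^2 * (Q*(1+P^2)) / U \<ge> m * y^3" by (simp add: algebra_simps power3_eq_cube power2_eq_square)
  moreover have "y - y^2 + y^3/4 \<ge> 0"
  proof -
    have "y - y^2 + y^3/4 = y * (1 - y/2)^2" by (simp add: algebra_simps power2_eq_square power3_eq_cube)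
    then show ?thesis using y1 by simp
  qed
  moreover have "(m - 1/4) * y^3 = m*y^3 - y^3/4" by (simp add: algebra_simps)
  ultimately show ?thesis unfolding lhs y_def[symmetric] by linarith
qed

lemma barrier:
  fixes f f' :: "real \<Rightarrow> real"
  assumes "a \<le> t" and cont: "continuous_on {a..t} f" and fa: "f a \<ge> 0"
    and der: "\<And>x. a \<le> x \<Longrightarrow> x < t \<Longrightarrow> (f has_real_derivative f' x) (at x within {a..})"
    and pos: "\<And>x. a \<le> x \<Longrightarrow> x < t \<Longrightarrow> f x \<ge> 0 \<Longrightarrow> f' x > 0"
  shows "\<forall>x\<in>{a..t}. f x \<ge> 0"
proof (rule ccontr)
  assume "\<not> ?thesis"
  then obtain x1 where x1: "x1 \<in> {a..t}" "f x1 < 0" by force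
  define S where "S = {a..x1} \<inter> f -` {0..}"
  have "closed S" unfolding S_def
    by (rule continuous_closed_preimage) (use cont x1 in \<open>auto intro: continuous_on_subset\<close>)
  moreover have "a \<in> S" using x1 fa by (auto simp: S_def)
  moreover have "bdd_above S" by (auto simp: S_def bdd_above_def)
  ultimately have sS: "Sup S \<in> S" using closed_contains_Sup by blast
  define s where "s = Sup S"
  have ss: "a \<le> s" "s \<le> x1" "f s \<ge> 0" using sS by (auto simp: S_def s_def)
  with x1 have "s < x1" by (metis linorder_not_le order_antisym)
  with x1 have st: "s < t" by auto
  from has_real_derivative_pos_inc_right[OF der[OF ss(1) st] pos[OF ss(1) st ss(3)]]
  obtain d where d: "d > 0" "\<forall>h>0. s + h \<in> {a..} \<longrightarrow> h < d \<longrightarrow> f s < f (s + h)" by blast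
  define h where "h = min (d/2) (x1 - s)"
  have h: "h > 0" "h < d" "s + h \<le> x1" using d \<open>s < x1\<close> by (auto simp: h_def)
  then have "f s < f (s + h)" using d ss by auto
  then have "s + h \<in> S" using h ss by (auto simp: S_def)
  then have "s + h \<le> s" unfolding s_def by (rule cSup_upper) fact
  with h show False by simp
qed


lemma phi_nonneg:
  assumes n: "n \<ge> 2" and a: "a > 0" and sol: "is_sol n a b u u'"
    and ph: "a * u' a - u a \<ge> 0" and t: "a \<le> t" "ereal t < b"
  shows "t * u' t - u t \<ge> 0"
proof -
  have D: "a \<le> x \<Longrightarrow> x \<le> t \<Longrightarrow> ereal x < b" for x using t(2)
    by (meson ereal_less_eq(3) le_less_trans)
  have "\<forall>x\<in>{a..t}. (\<lambda>x. x * u' x - u x) x \<ge> 0"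
  proof (rule barrier[where f' = "\<lambda>x. x * ode_rhs n x (u x) (u' x)"])
    show "a \<le> t" by fact
    show "continuous_on {a..t} (\<lambda>x. x * u' x - u x)"
      using sol_cont[OF sol t(2)] by (intro continuous_intros) auto
    show "0 \<le> a * u' a - u a" by fact
  next
    fix x assume x: "a \<le> x" "x < t"
    have d1: "(u has_real_derivative u' x) (at x within {a..})"
      and d2: "(u' has_real_derivative ode_rhs n x (u x) (u' x)) (at x within {a..})"
      using sol_D[OF sol x(1) D] x by auto
    show "((\<lambda>x. x * u' x - u x) has_real_derivative x * ode_rhs n x (u x) (u' x)) (at x within {a..})"
      by (rule derivative_eq_intros d1 d2 refl | simp)+
  next
    fix x assume x: "a \<le> x" "x < t" and f: "0 \<le> x * u' x - u x"
    have U: "u x > 0" using sol_D[OF sol x(1) D] x by auto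
    have m: "real n - 1 \<ge> 1" using n by simp
    have "x/2 * u' x + (real n - 1)/u x - u x/2 = (x * u' x - u x)/2 + (real n - 1)/u x"
      by (simp add: field_simps)
    also have "\<dots> > 0" using f U m by (intro add_nonneg_pos) auto
    finally have "ode_rhs n x (u x) (u' x) > 0" unfolding ode_rhs_def
      by (intro mult_pos_pos) (auto simp: add_pos_nonneg)
    then show "0 < x * ode_rhs n x (u x) (u' x)" using a x by simp
  qed
  then show ?thesis using t by auto
qed


lemma core:
  assumes n: "n \<ge> 2" and a: "a > 0" and sol: "is_sol n a b u u'" and ab: "ereal a < b"
    and ph: "a * u' a - u a \<ge> 0" and big: "u a ^ 2 \<ge> 2 * (real n - 1)"
  shows "b \<le> ereal ((1 + 1 / (real n - 1)) * a)"
proof (rule ccontr)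
  define m where "m = real n - 1"
  have m: "m \<ge> 1" using n by (simp add: m_def)
  define X where "X = (1 + 1 / m) * a"
  assume "\<not> ?thesis"
  then have Xb: "ereal X < b" by (simp add: X_def m_def)
  have aX: "a < X" using a m by (simp add: X_def field_simps)
  have D: "a \<le> x \<Longrightarrow> x \<le> X \<Longrightarrow> ereal x < b" for x using Xb
    by (meson ereal_less_eq(3) le_less_trans)
  have U: "a \<le> x \<Longrightarrow> x \<le> X \<Longrightarrow> u x > 0" for x using sol_D(1)[OF sol _ D] by auto
  have PH: "a \<le> x \<Longrightarrow> x \<le> X \<Longrightarrow> x * u' x - u x \<ge> 0" for x
    using phi_nonneg[OF n a sol ph _ D] by auto
  have P: "a \<le> x \<Longrightarrow> x \<le> X \<Longrightarrow> u' x > 0" for x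
  proof -
    assume x: "a \<le> x" "x \<le> X"
    have "x * u' x > 0" using PH[OF x] U[OF x] by linarith
    then show ?thesis using a x by (simp add: zero_less_mult_iff)
  qed
  have Umono: "a \<le> x \<Longrightarrow> x \<le> X \<Longrightarrow> u a \<le> u x" for x
  proof -
    assume x: "a \<le> x" "x \<le> X"
    show ?thesis
    proof (rule DERIV_nonneg_imp_increasing_open[OF x(1)])
      fix y assume y: "a < y" "y < x"
      show "\<exists>z. (u has_real_derivative z) (at y) \<and> 0 \<le> z"
      proof (intro exI conjI)
        have yy: "a \<le> y" "y \<le> X" using y x by auto
        show "(u has_real_derivative u' y) (at y)" using sol_at(1)[OF sol y(1) D[OF yy]] .
        show "0 \<le> u' y" using P[OF yy] by simp
      qed
    next
      show "continuous_on {a..x} u" using sol_cont(1)[OF sol D[OF x]] .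
    qed
  qed
  have BIG: "a \<le> x \<Longrightarrow> x \<le> X \<Longrightarrow> u x ^ 2 \<ge> 2 * m" for x
  proof -
    assume x: "a \<le> x" "x \<le> X"
    have "u a ^ 2 \<le> u x ^ 2" using Umono[OF x] U[of a] aX by (intro power_mono) auto
    then show ?thesis using big by (simp add: m_def)
  qed
  define c where "c = m - 1/4"
  define G where "G x = (u x / (x * u' x))^2 + 4 * c * (x - a) / (x + a)" for x
  have "G X \<le> G a"
  proof (rule DERIV_nonpos_imp_decreasing_open[OF less_imp_le[OF aX]])
    fix x assume x: "a < x" "x < X"
    have xa: "a \<le> x" "x \<le> X" using x by auto
    define R where "R = ode_rhs n x (u x) (u' x)"
    have d1: "(u has_real_derivative u' x) (at x)"
      and d2: "(u' has_real_derivative R) (at x)"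
      using sol_at[OF sol x(1) D[OF xa]] by (auto simp: R_def)
    have Ux: "u x > 0" and Px: "u' x > 0" using U[OF xa] P[OF xa] by auto
    have x0: "x > 0" using a x by simp
    define y where "y = x * u' x / u x"
    define y' where "y' = ((u' x + x*R)*u x - x*(u' x)^2)/(u x)^2"
    define G' where "G' = -2 * y' / y^3 + 8 * c * a / (x + a)^2"
    have xp0: "x * u' x \<noteq> 0" using Px x0 by simp
    have dxp: "((\<lambda>x. x * u' x) has_real_derivative 1 * u' x + R * x) (at x)"
      by (rule DERIV_mult[OF DERIV_ident d2])
    define z' where "z' = (u' x * (x * u' x) - u x * (1 * u' x + R * x)) / (x * u' x * (x * u' x))"
    have dz: "((\<lambda>x. u x / (x * u' x)) has_real_derivative z') (at x)"
      unfolding z'_def by (rule DERIV_divide[OF d1 dxp xp0])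
    have dsq: "((\<lambda>x. (u x / (x * u' x))^2) has_real_derivative of_nat 2 * (z' * (u x / (x * u' x))^(2 - Suc 0))) (at x)"
      by (rule DERIV_power[OF dz])
    have dnum: "((\<lambda>x. 4 * c * (x - a)) has_real_derivative 4 * c * (1 - 0)) (at x)"
      by (rule DERIV_cmult[OF DERIV_diff[OF DERIV_ident DERIV_const]])
    have dden: "((\<lambda>x. x + a) has_real_derivative 1 + 0) (at x)"
      by (rule DERIV_add[OF DERIV_ident DERIV_const])
    have dL: "((\<lambda>x. 4 * c * (x - a) / (x + a)) has_real_derivative
        ((4 * c * (1 - 0)) * (x + a) - 4 * c * (x - a) * (1 + 0)) / ((x + a) * (x + a))) (at x)"
      using a x0 by (intro DERIV_divide[OF dnum dden]) simp
    have dG0: "(G has_real_derivative of_nat 2 * (z' * (u x / (x * u' x))^(2 - Suc 0)) +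
        ((4 * c * (1 - 0)) * (x + a) - 4 * c * (x - a) * (1 + 0)) / ((x + a) * (x + a))) (at x)"
      unfolding G_def[abs_def] by (rule DERIV_add[OF dsq dL])
    have e1: "of_nat 2 * (z' * (u x / (x * u' x))^(2 - Suc 0)) = -2 * y' / y^3"
      using Ux Px x0 unfolding z'_def y'_def y_def
      by (simp add: field_simps power2_eq_square power3_eq_cube)
    have e2: "((4 * c * (1 - 0)) * (x + a) - 4 * c * (x - a) * (1 + 0)) / ((x + a) * (x + a))
       = 8 * c * a / (x + a)^2"
      by (simp add: power2_eq_square algebra_simps)
    have dG: "(G has_real_derivative G') (at x)" using dG0 unfolding e1 e2 G'_def .
    have key: "x * y' \<ge> c * y^3"
      using key_alg[OF x0 Ux m BIG[OF xa] PH[OF xa]]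
      by (simp add: y_def y'_def c_def R_def ode_rhs_def m_def)
    have ypos: "y > 0" using Ux Px x0 by (simp add: y_def)
    have "y' / y^3 \<ge> c / x" using key ypos x0 by (simp add: field_simps)
    moreover have "4 * a / (x + a)^2 \<le> 1 / x"
    proof -
      have "0 \<le> (x - a)^2" by simp
      then have "4 * a * x \<le> (x + a)^2" by (simp add: power2_eq_square algebra_simps)
      then show ?thesis using x0 a by (simp add: field_simps)
    qed
    ultimately have "G' \<le> 0"
    proof -
      assume h1: "y' / y^3 \<ge> c / x" and h2: "4 * a / (x + a)^2 \<le> 1 / x"
      have cpos: "c > 0" using m by (simp add: c_def)
      have "8 * c * a / (x + a)^2 = 2 * c * (4 * a / (x + a)^2)" by simp
      also have "\<dots> \<le> 2 * c * (1 / x)" using h2 cpos by (intro mult_left_mono) auto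
      also have "\<dots> = 2 * (c / x)" by simp
      also have "\<dots> \<le> 2 * (y' / y^3)" using h1 by simp
      finally show ?thesis unfolding G'_def by simp
    qed
    then show "\<exists>z. (G has_real_derivative z) (at x) \<and> z \<le> 0" using dG by blast
  next
    have cu: "continuous_on {a..X} u" "continuous_on {a..X} u'" using sol_cont[OF sol Xb] by auto
    have nz: "\<forall>x\<in>{a..X}. x * u' x \<noteq> 0" using P a by (metis atLeastAtMost_iff less_irrefl mult_eq_0_iff order_less_le_trans)
    have nz2: "\<forall>x\<in>{a..X}. x + a \<noteq> 0" using a by auto
    show "continuous_on {a..X} G" unfolding G_def[abs_def]
      using cu nz nz2 by (intro continuous_intros) auto
  qed
  moreover have "G a \<le> 1"
  proof -
    have "u a \<le> a * u' a" using ph by simp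
    then have "u a / (a * u' a) \<le> 1" using P[of a] a aX U[of a] by (simp add: field_simps)
    moreover have "u a / (a * u' a) \<ge> 0" using P[of a] a aX U[of a] by simp
    ultimately have "(u a / (a * u' a))^2 \<le> 1" by (simp add: power_le_one)
    then show ?thesis by (simp add: G_def)
  qed
  moreover have "G X > 1"
  proof -
    have "(u X / (X * u' X))^2 > 0" using U[of X] P[of X] aX a by simp
    moreover have "4 * c * (X - a) / (X + a) = (4*m - 1) / (2*m + 1)"
    proof -
      have e: "X - a = a/m" "X + a = a*(2*m+1)/m" using m by (simp_all add: X_def field_simps)
      have f: "(X - a) / (X + a) = 1/(2*m+1)" unfolding e using m a by (simp add: divide_simps)
      have "4 * c * (X - a) / (X + a) = 4*c*((X - a) / (X + a))" by simp
      also have "\<dots> = 4*c/(2*m+1)" unfolding f by simp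
      also have "\<dots> = (4*m - 1) / (2*m + 1)" by (simp add: c_def algebra_simps)
      finally show ?thesis .
    qed
    moreover have "(4*m - 1) / (2*m + 1) \<ge> 1" using m by (simp add: field_simps)
    ultimately show ?thesis unfolding G_def by linarith
  qed
  ultimately show False by simp
qed


theorem lemma1:
  fixes n :: nat and \<sigma> x0 :: real and x_inf :: ereal and u u' :: "real \<Rightarrow> real"
  assumes "n \<ge> 2" and "\<sigma> > 0" and "x0 > 0"
    and "ereal x0 < x_inf"
    and "is_maximal_sol n x0 x_inf u u'"
    and "u x0 = \<sigma> * x0" and "u' x0 \<ge> \<sigma>"
  shows "x_inf < \<infinity> \<and>
         (u x0 \<ge> sqrt (2 * (real n - 1)) \<longrightarrow> x_inf \<le> ereal ((1 + 1 / (real n - 1)) * x0))"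
proof -
  note n = assms(1) and sg = assms(2) and x0 = assms(3) and xb = assms(4)
  have sol: "is_sol n x0 x_inf u u'" using assms(5) by (simp add: is_maximal_sol_def)
  have ph0: "x0 * u' x0 - u x0 \<ge> 0"
  proof -
    have "x0 * u' x0 - u x0 = x0 * (u' x0 - \<sigma>)" using assms(6) by (simp add: algebra_simps)
    then show ?thesis using x0 assms(7) by simp
  qed
  define m where "m = real n - 1"
  have m: "m \<ge> 1" using n by (simp add: m_def)
  have sq: "sqrt (2*m) \<le> v \<Longrightarrow> 2 * m \<le> v^2" for v
  proof -
    assume h: "sqrt (2*m) \<le> v"
    have "(sqrt (2*m))^2 \<le> v^2" using h m by (intro power_mono) auto
    then show ?thesis using m by simp
  qed
  have part2: "u x0 \<ge> sqrt (2 * (real n - 1)) \<longrightarrow> x_inf \<le> ereal ((1 + 1 / (real n - 1)) * x0)"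
  proof
    assume "u x0 \<ge> sqrt (2 * (real n - 1))"
    then have "u x0 ^ 2 \<ge> 2 * (real n - 1)" using sq unfolding m_def by blast
    then show "x_inf \<le> ereal ((1 + 1 / (real n - 1)) * x0)"
      using core[OF n x0 sol xb ph0] by blast
  qed
  have part1: "x_inf < \<infinity>"
  proof (rule ccontr)
    assume "\<not> x_inf < \<infinity>"
    then have inf: "x_inf = \<infinity>" by simp
    define x1 where "x1 = x0 + sqrt (2*m) / \<sigma>"
    have x01: "x0 \<le> x1" using sg m by (simp add: x1_def)
    have Dall: "ereal x < x_inf" for x using inf by simp
    have ratio: "u x0 / x0 \<le> u x1 / x1"
    proof (rule DERIV_nonneg_imp_increasing_open[OF x01])
      fix x assume x: "x0 < x" "x < x1"
      have xp: "x > 0" using x x0 by simp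
      have "((\<lambda>x. u x / x) has_real_derivative (u' x * x - u x * 1) / (x * x)) (at x)"
        using xp by (intro DERIV_divide[OF sol_at(1)[OF sol x(1) Dall] DERIV_ident]) simp
      moreover have "(u' x * x - u x * 1) / (x * x) \<ge> 0"
        using phi_nonneg[OF n x0 sol ph0 _ Dall, of x] x by (simp add: algebra_simps)
      ultimately show "\<exists>y. ((\<lambda>x. u x / x) has_real_derivative y) (at x) \<and> 0 \<le> y" by blast
    next
      show "continuous_on {x0..x1} (\<lambda>x. u x / x)"
        using sol_cont(1)[OF sol Dall] x0 by (intro continuous_intros) auto
    qed
    have x1p: "x1 > 0" using x0 x01 by simp
    have "u x1 \<ge> \<sigma> * x1" using ratio assms(6) x0 x1p by (simp add: field_simps)
    moreover have "\<sigma> * x1 = \<sigma> * x0 + sqrt (2*m)" using sg by (simp add: x1_def field_simps)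
    moreover have "\<sigma> * x0 \<ge> 0" using sg x0 by simp
    ultimately have "u x1 \<ge> sqrt (2*m)" by linarith
    then have big: "u x1 ^ 2 \<ge> 2 * (real n - 1)" using sq unfolding m_def by blast
    have sol1: "is_sol n x1 x_inf u u'" by (rule sol_restrict[OF sol x01])
    have ph1: "x1 * u' x1 - u x1 \<ge> 0" by (rule phi_nonneg[OF n x0 sol ph0 x01 Dall])
    have "x_inf \<le> ereal ((1 + 1 / (real n - 1)) * x1)"
      by (rule core[OF n x1p sol1 Dall ph1 big])
    with inf show False by simp
  qed
  show ?thesis using part1 part2 by blast
qed

end
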